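(* Let $\alpha\in(-\infty,0)\cup(0,1)$, $\gamma\in(0,1]$, let $h:\mathbb{R}\to\mathbb{R}$ be continuous with $m\le h\le 1$ for some $m\in(0,1)$, and let $A$ be a continuous, bounded, nonnegative function on $\mathbb{R}$. Define $h_A(x,y)=\frac1\alpha x^\alpha h(y)+\frac1\alpha A(y)x^{\alpha(1-\gamma)}$ for $(x,y)\in\mathbb{R}_+\times\mathbb{R}$. Then for each $y\in\mathbb{R}$, $x\mapsto h_A(x,y)$ is strictly increasing and strictly concave on $\mathbb{R}_+$, with $\frac{\partial}{\partial x}h_A(0+,y)=\infty$ and $\frac{\partial}{\partial x}h_A(\infty,y)=0$. Moreover there exist constants $\vartheta\in(0,1)$ and $\varrho\in(1,\infty)$ such that $\vartheta\frac{\partial}{\partial x}h_A(x,y)\ge\frac{\partial}{\partial x}h_A(\varrho x,y)$ for all $(x,y)\in\mathbb{R}_+\times\mathbb{R}$. Furthermore, if $\alpha\in(0,1)$ there exist constants $\kappa_1\in(0,\infty)$ and $\rho_1\in(0,1)$ such that $0<h_A(x,y)\le\kappa_1(1+x^{\rho_1})$ for all $(x,y)\in\mathbb{R}_+\times\mathbb{R}$; if $\alpha\in(-\infty,0)$ there exist constants $\kappa_2\in(-\infty,0)$ and $\rho_2\in(-\infty,0)$ such that $0>h_A(x,y)\ge\kappa_2(1+x^{\rho_2})$ for all $(x,y)\in\mathbb{R}_+\times\mathbb{R}$. *)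

theory Defs
  imports "HOL-Analysis.Analysis"
begin

definition strictly_concave_on :: "real set \<Rightarrow> (real \<Rightarrow> real) \<Rightarrow> bool" where
  "strictly_concave_on S f \<longleftrightarrow> convex S \<and>
     (\<forall>x\<in>S. \<forall>y\<in>S. \<forall>t. x \<noteq> y \<longrightarrow> 0 < t \<longrightarrow> t < 1 \<longrightarrow>
        f ((1 - t) * x + t * y) > (1 - t) * f x + t * f y)"

definition hA :: "real \<Rightarrow> real \<Rightarrow> (real \<Rightarrow> real) \<Rightarrow> (real \<Rightarrow> real) \<Rightarrow> real \<Rightarrow> real \<Rightarrow> real" where
  "hA \<alpha> \<gamma> h A x y = (1 / \<alpha>) * x powr \<alpha> * h y + (1 / \<alpha>) * A y * x powr (\<alpha> * (1 - \<gamma>))"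

end

theory Submission
  imports Defs "HOL-Real_Asymp.Real_Asymp"
begin

lemma concave_helper:
  fixes f f' :: "real \<Rightarrow> real"
  assumes d: "\<And>x. x>0 \<Longrightarrow> (f has_real_derivative f' x) (at x)"
    and dec: "\<And>x y. 0<x \<Longrightarrow> x<y \<Longrightarrow> f' y < f' x"
  shows "strictly_concave_on {0<..} f"
proof -
  have key: "f ((1 - t) * x + t * y) > (1 - t) * f x + t * f y"
    if "0 < x" "x < y" "0 < t" "t < 1" for x y t
  proof -
    define p where "p = (1 - t) * x + t * y"
    have px: "p - x = t * (y - x)" "y - p = (1 - t) * (y - x)" unfolding p_def by algebra+
    have a1: "0 < t * (y - x)" "0 < (1 - t) * (y - x)" using that by simp_all
    have "x < p" using a1(1) px(1) by linarith
    have "p < y" using a1(2) px(2) by linarith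
    obtain z1 where z1: "x < z1" "z1 < p" "f p - f x = (p - x) * f' z1"
      using MVT2[of x p f f'] \<open>x < p\<close> d \<open>0<x\<close> by force
    obtain z2 where z2: "p < z2" "z2 < y" "f y - f p = (y - p) * f' z2"
      using MVT2[of p y f f'] \<open>p < y\<close> d \<open>0<x\<close> \<open>x<p\<close> by force
    have lt: "f' z2 < f' z1" using dec z1 z2 \<open>0<x\<close> by force
    have pos: "0 < t * (1 - t) * (y - x)" using that by simp
    have "t * (1 - t) * (y - x) * f' z2 < t * (1 - t) * (y - x) * f' z1"
      using mult_strict_left_mono[OF lt pos] .
    moreover have "t * (f y - f p) = t * (1 - t) * (y - x) * f' z2" using z2(3) px(2) by simp
    moreover have "(1 - t) * (f p - f x) = t * (1 - t) * (y - x) * f' z1" using z1(3) px(1) by simp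
    ultimately have "t * (f y - f p) < (1 - t) * (f p - f x)" by linarith
    thus ?thesis unfolding p_def[symmetric] by (simp add: algebra_simps)
  qed
  show ?thesis unfolding strictly_concave_on_def
  proof (intro conjI ballI allI impI)
    show "convex {0::real<..}" by (rule convex_real_interval)
  next
    fix x y t :: real assume xy: "x \<in> {0<..}" "y \<in> {0<..}" "x \<noteq> y" "0 < t" "t < 1"
    show "f ((1 - t) * x + t * y) > (1 - t) * f x + t * f y"
    proof (cases "x < y")
      case True thus ?thesis using key xy by auto
    next
      case False
      hence "y < x" using xy by auto
      from key[OF _ this, of "1 - t"] xy show ?thesis by (simp add: algebra_simps)
    qed
  qed
qed

lemma mono_helper:
  fixes f f' :: "real \<Rightarrow> real"
  assumes d: "\<And>x. x>0 \<Longrightarrow> (f has_real_derivative f' x) (at x)"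
    and pos: "\<And>x. 0<x \<Longrightarrow> 0 < f' x"
  shows "strict_mono_on {0<..} f"
proof (rule strict_mono_onI)
  fix x y :: real assume "x \<in> {0<..}" "y \<in> {0<..}" "x < y"
  then obtain z where z: "x < z" "z < y" "f y - f x = (y - x) * f' z"
    using MVT2[of x y f f'] d by force
  have "0 < (y - x) * f' z" using pos[of z] z \<open>x \<in> {0<..}\<close> \<open>x<y\<close> by simp
  thus "f x < f y" using z by simp
qed

theorem lemma3p1:
  fixes \<alpha> \<gamma> m :: real and h A :: "real \<Rightarrow> real"
  assumes alpha: "\<alpha> < 0 \<or> (0 < \<alpha> \<and> \<alpha> < 1)"
    and gamma: "0 < \<gamma>" "\<gamma> \<le> 1"
    and h_cont: "continuous_on UNIV h"
    and m: "0 < m" "m < 1"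
    and h_bounds: "\<And>y. m \<le> h y \<and> h y \<le> 1"
    and A_cont: "continuous_on UNIV A"
    and A_bdd: "bounded (range A)"
    and A_nonneg: "\<And>y. 0 \<le> A y"
  shows
    "(\<forall>y. strict_mono_on {0<..} (\<lambda>x. hA \<alpha> \<gamma> h A x y)
        \<and> strictly_concave_on {0<..} (\<lambda>x. hA \<alpha> \<gamma> h A x y)
        \<and> (\<forall>x>0. (\<lambda>t. hA \<alpha> \<gamma> h A t y) differentiable (at x))
        \<and> filterlim (\<lambda>x. deriv (\<lambda>t. hA \<alpha> \<gamma> h A t y) x) at_top (at_right 0)
        \<and> ((\<lambda>x. deriv (\<lambda>t. hA \<alpha> \<gamma> h A t y) x) \<longlongrightarrow> 0) at_top)
     \<and> (\<exists>\<theta> \<rho>. 0 < \<theta> \<and> \<theta> < 1 \<and> 1 < \<rho> \<and>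
          (\<forall>x>0. \<forall>y. \<theta> * deriv (\<lambda>t. hA \<alpha> \<gamma> h A t y) x
                       \<ge> deriv (\<lambda>t. hA \<alpha> \<gamma> h A t y) (\<rho> * x)))
     \<and> (0 < \<alpha> \<and> \<alpha> < 1 \<longrightarrow>
          (\<exists>\<kappa>1 \<rho>1. 0 < \<kappa>1 \<and> 0 < \<rho>1 \<and> \<rho>1 < 1 \<and>
             (\<forall>x>0. \<forall>y. 0 < hA \<alpha> \<gamma> h A x y \<and> hA \<alpha> \<gamma> h A x y \<le> \<kappa>1 * (1 + x powr \<rho>1))))
     \<and> (\<alpha> < 0 \<longrightarrow>
          (\<exists>\<kappa>2 \<rho>2. \<kappa>2 < 0 \<and> \<rho>2 < 0 \<and>
             (\<forall>x>0. \<forall>y. 0 > hA \<alpha> \<gamma> h A x y \<and> hA \<alpha> \<gamma> h A x y \<ge> \<kappa>2 * (1 + x powr \<rho>2))))"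
proof -
  define \<beta> where "\<beta> = \<alpha> * (1 - \<gamma>)"
  have a0: "\<alpha> \<noteq> 0" "\<alpha> < 1" using alpha by auto
  have b1: "\<beta> < 1"
  proof (cases "\<alpha> < 0")
    case True
    hence "\<alpha> * (1 - \<gamma>) \<le> 0" using gamma by (intro mult_nonpos_nonneg) auto
    thus ?thesis unfolding \<beta>_def by simp
  next
    case False
    hence "0 \<le> \<alpha> * \<gamma>" using gamma by simp
    hence "\<alpha> * (1 - \<gamma>) \<le> \<alpha>" by (simp add: algebra_simps)
    thus ?thesis unfolding \<beta>_def using alpha False by linarith
  qed
  define D where "D y x = h y * x powr (\<alpha> - 1) + A y * (1 - \<gamma>) * x powr (\<beta> - 1)" for y x
  have hpos: "0 < h y" for y using h_bounds[of y] m by linarith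
  have der: "((\<lambda>t. hA \<alpha> \<gamma> h A t y) has_real_derivative D y x) (at x)" if "0 < x" for x y
  proof -
    have "((\<lambda>t. hA \<alpha> \<gamma> h A t y) has_real_derivative
       (1 / \<alpha>) * (\<alpha> * x powr (\<alpha> - 1)) * h y + (1 / \<alpha>) * A y * (\<beta> * x powr (\<beta> - 1))) (at x)"
      unfolding hA_def \<beta>_def[symmetric]
      by (rule derivative_eq_intros refl has_real_derivative_powr that | simp)+
    moreover have "(1 / \<alpha>) * (\<alpha> * x powr (\<alpha> - 1)) * h y + (1 / \<alpha>) * A y * (\<beta> * x powr (\<beta> - 1)) = D y x"
      unfolding D_def \<beta>_def using a0 by (simp add: field_simps)
    ultimately show ?thesis by simp
  qed
  have dv: "deriv (\<lambda>t. hA \<alpha> \<gamma> h A t y) x = D y x" if "0 < x" for x y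
    using der[OF that] by (rule DERIV_imp_deriv)
  have c1: "0 \<le> 1 - \<gamma>" using gamma by simp
  have Dpos: "0 < D y x" if "0 < x" for x y
    unfolding D_def using hpos[of y] that A_nonneg[of y] c1
    by (intro add_pos_nonneg mult_pos_pos mult_nonneg_nonneg) auto
  have Ddec: "D y z < D y x" if "0 < x" "x < z" for x z y
  proof -
    have "z powr (\<alpha> - 1) < x powr (\<alpha> - 1)" using that a0 by (simp add: powr_less_mono2_neg)
    hence 1: "h y * z powr (\<alpha> - 1) < h y * x powr (\<alpha> - 1)" using hpos[of y] by simp
    have "z powr (\<beta> - 1) \<le> x powr (\<beta> - 1)" using that b1 by (intro powr_mono2') auto
    hence 2: "A y * (1 - \<gamma>) * z powr (\<beta> - 1) \<le> A y * (1 - \<gamma>) * x powr (\<beta> - 1)"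
      using A_nonneg[of y] c1 by (intro mult_left_mono) auto
    show ?thesis unfolding D_def using 1 2 by linarith
  qed
  obtain M where M: "\<And>y. A y \<le> M" "0 \<le> M"
  proof -
    obtain a where "\<forall>x\<in>range A. norm x \<le> a" using A_bdd bounded_iff by blast
    hence "A y \<le> a" for y by (metis abs_ge_self order_trans rangeI real_norm_def)
    moreover have "0 \<le> a" using calculation[of 0] A_nonneg[of 0] by linarith
    ultimately show ?thesis using that by blast
  qed
  have part1: "\<forall>y. strict_mono_on {0<..} (\<lambda>x. hA \<alpha> \<gamma> h A x y)
        \<and> strictly_concave_on {0<..} (\<lambda>x. hA \<alpha> \<gamma> h A x y)
        \<and> (\<forall>x>0. (\<lambda>t. hA \<alpha> \<gamma> h A t y) differentiable (at x))
        \<and> filterlim (\<lambda>x. deriv (\<lambda>t. hA \<alpha> \<gamma> h A t y) x) at_top (at_right 0)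
        \<and> ((\<lambda>x. deriv (\<lambda>t. hA \<alpha> \<gamma> h A t y) x) \<longlongrightarrow> 0) at_top"
  proof (rule allI, intro conjI)
    fix y
    show "strict_mono_on {0<..} (\<lambda>x. hA \<alpha> \<gamma> h A x y)"
      by (rule mono_helper[OF der Dpos])
    show "strictly_concave_on {0<..} (\<lambda>x. hA \<alpha> \<gamma> h A x y)"
      by (rule concave_helper[OF der Ddec])
    show "\<forall>x>0. (\<lambda>t. hA \<alpha> \<gamma> h A t y) differentiable (at x)"
      using der real_differentiable_def by blast
    have ev0: "eventually (\<lambda>x. D y x = deriv (\<lambda>t. hA \<alpha> \<gamma> h A t y) x) (at_right 0)"
      using eventually_at_right_less[of 0] dv by (auto elim!: eventually_mono)
    have l1: "filterlim (\<lambda>x::real. x powr (\<alpha> - 1)) at_top (at_right 0)" using a0 by real_asymp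
    have "filterlim (\<lambda>x. h y * x powr (\<alpha> - 1)) at_top (at_right 0)"
      using hpos[of y] l1 by (intro filterlim_tendsto_pos_mult_at_top[OF tendsto_const]) auto
    moreover have "eventually (\<lambda>x. h y * x powr (\<alpha> - 1) \<le> D y x) (at_right 0)"
      using eventually_at_right_less[of 0]
    proof (rule eventually_mono)
      fix x :: real assume "0 < x"
      thus "h y * x powr (\<alpha> - 1) \<le> D y x" unfolding D_def using A_nonneg[of y] c1 by simp
    qed
    ultimately have "filterlim (D y) at_top (at_right 0)" by (rule filterlim_at_top_mono)
    thus "filterlim (\<lambda>x. deriv (\<lambda>t. hA \<alpha> \<gamma> h A t y) x) at_top (at_right 0)"
      using ev0 filterlim_cong by fastforce
    have l2: "((\<lambda>x::real. x powr (\<alpha> - 1)) \<longlongrightarrow> 0) at_top" using a0 by real_asymp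
    have l3: "((\<lambda>x::real. x powr (\<beta> - 1)) \<longlongrightarrow> 0) at_top" using b1 by real_asymp
    have "(D y \<longlongrightarrow> h y * 0 + A y * (1 - \<gamma>) * 0) at_top" unfolding D_def
      by (intro tendsto_intros l2 l3)
    hence "(D y \<longlongrightarrow> 0) at_top" by simp
    moreover have "eventually (\<lambda>x. D y x = deriv (\<lambda>t. hA \<alpha> \<gamma> h A t y) x) at_top"
      using eventually_gt_at_top[of "0::real"] by eventually_elim (simp add: dv)
    ultimately show "((\<lambda>x. deriv (\<lambda>t. hA \<alpha> \<gamma> h A t y) x) \<longlongrightarrow> 0) at_top"
      using tendsto_cong by fastforce
  qed
  have part2: "\<exists>\<theta> \<rho>. 0 < \<theta> \<and> \<theta> < 1 \<and> 1 < \<rho> \<and>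
          (\<forall>x>0. \<forall>y. \<theta> * deriv (\<lambda>t. hA \<alpha> \<gamma> h A t y) x
                       \<ge> deriv (\<lambda>t. hA \<alpha> \<gamma> h A t y) (\<rho> * x))"
  proof (intro exI conjI allI impI)
    define \<theta> where "\<theta> = max (2 powr (\<alpha> - 1)) (2 powr (\<beta> - 1))"
    show "0 < \<theta>" unfolding \<theta>_def by (simp add: less_max_iff_disj)
    show "\<theta> < 1" unfolding \<theta>_def using a0 b1 by (auto intro: powr_less_one)
    show "1 < (2::real)" by simp
    fix x :: real and y assume x: "0 < x"
    have "D y (2 * x) = h y * 2 powr (\<alpha> - 1) * x powr (\<alpha> - 1) + A y * (1 - \<gamma>) * 2 powr (\<beta> - 1) * x powr (\<beta> - 1)"
      unfolding D_def using x by (simp add: powr_mult)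
    also have "\<dots> \<le> h y * \<theta> * x powr (\<alpha> - 1) + A y * (1 - \<gamma>) * \<theta> * x powr (\<beta> - 1)"
      unfolding \<theta>_def using hpos[of y] A_nonneg[of y] c1
      by (intro add_mono mult_right_mono mult_left_mono) auto
    also have "\<dots> = \<theta> * D y x" unfolding D_def by (simp add: algebra_simps)
    finally show "\<theta> * deriv (\<lambda>t. hA \<alpha> \<gamma> h A t y) x \<ge> deriv (\<lambda>t. hA \<alpha> \<gamma> h A t y) (2 * x)"
      using dv x by simp
  qed
  have hA_eq: "hA \<alpha> \<gamma> h A x y = (1 / \<alpha>) * (h y * x powr \<alpha> + A y * x powr \<beta>)" for x y
    unfolding hA_def \<beta>_def by (simp add: algebra_simps)
  have S_pos: "0 < h y * x powr \<alpha> + A y * x powr \<beta>" if "0 < x" for x y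
    using hpos[of y] that A_nonneg[of y] by (intro add_pos_nonneg) auto
  have S_le: "h y * x powr \<alpha> + A y * x powr \<beta> \<le> (1 + M) * (1 + x powr \<alpha>)"
    if "0 < x" "x powr \<beta> \<le> 1 + x powr \<alpha>" for x y
  proof -
    have "h y * x powr \<alpha> \<le> x powr \<alpha>" using h_bounds[of y] using mult_right_mono[of "h y" 1 "x powr \<alpha>"] by simp
    moreover have "A y * x powr \<beta> \<le> M * (1 + x powr \<alpha>)"
      using M A_nonneg[of y] that by (intro mult_mono) auto
    ultimately show ?thesis by (simp add: algebra_simps)
  qed
  have part3: "0 < \<alpha> \<and> \<alpha> < 1 \<longrightarrow>
          (\<exists>\<kappa>1 \<rho>1. 0 < \<kappa>1 \<and> 0 < \<rho>1 \<and> \<rho>1 < 1 \<and>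
             (\<forall>x>0. \<forall>y. 0 < hA \<alpha> \<gamma> h A x y \<and> hA \<alpha> \<gamma> h A x y \<le> \<kappa>1 * (1 + x powr \<rho>1)))"
  proof
    assume ap: "0 < \<alpha> \<and> \<alpha> < 1"
    have bb: "0 \<le> \<beta>" "\<beta> \<le> \<alpha>" using ap gamma c1 unfolding \<beta>_def
      by (auto simp: mult_le_cancel_left1)
    have pw: "x powr \<beta> \<le> 1 + x powr \<alpha>" if "0 < x" for x :: real
    proof (cases "x \<le> 1")
      case True thus ?thesis using powr_le1[OF bb(1), of x] that using powr_ge_zero[of x \<alpha>] by linarith
    next
      case False hence "1 \<le> x" by simp
      thus ?thesis using powr_mono[OF bb(2), of x] powr_ge_zero[of x \<alpha>] by linarith
    qed
    show "\<exists>\<kappa>1 \<rho>1. 0 < \<kappa>1 \<and> 0 < \<rho>1 \<and> \<rho>1 < 1 \<and>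
             (\<forall>x>0. \<forall>y. 0 < hA \<alpha> \<gamma> h A x y \<and> hA \<alpha> \<gamma> h A x y \<le> \<kappa>1 * (1 + x powr \<rho>1))"
    proof (intro exI conjI allI impI)
      show "0 < (1 + M) / \<alpha>" using ap M by simp
      show "0 < \<alpha>" "\<alpha> < 1" using ap by auto
      fix x :: real and y assume x: "0 < x"
      show "0 < hA \<alpha> \<gamma> h A x y" unfolding hA_eq using S_pos[OF x, of y] ap by simp
      have "hA \<alpha> \<gamma> h A x y \<le> (1 / \<alpha>) * ((1 + M) * (1 + x powr \<alpha>))"
        unfolding hA_eq using S_le[OF x pw[OF x], of y] ap by (intro mult_left_mono) auto
      thus "hA \<alpha> \<gamma> h A x y \<le> (1 + M) / \<alpha> * (1 + x powr \<alpha>)" by simp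
    qed
  qed
  have part4: "\<alpha> < 0 \<longrightarrow>
          (\<exists>\<kappa>2 \<rho>2. \<kappa>2 < 0 \<and> \<rho>2 < 0 \<and>
             (\<forall>x>0. \<forall>y. 0 > hA \<alpha> \<gamma> h A x y \<and> hA \<alpha> \<gamma> h A x y \<ge> \<kappa>2 * (1 + x powr \<rho>2)))"
  proof
    assume an: "\<alpha> < 0"
    have bb: "\<beta> \<le> 0" "\<alpha> \<le> \<beta>" using an gamma c1 unfolding \<beta>_def
      by (auto simp: mult_nonpos_nonneg mult_le_cancel_left1)
    have pw: "x powr \<beta> \<le> 1 + x powr \<alpha>" if "0 < x" for x :: real
    proof (cases "x \<le> 1")
      case True thus ?thesis using powr_mono'[OF bb(2), of x] that by simp
    next
      case False hence "1 \<le> x" by simp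
      hence "x powr \<beta> \<le> 1" using powr_mono[OF bb(1), of x] by simp
      thus ?thesis using powr_ge_zero[of x \<alpha>] by linarith
    qed
    show "\<exists>\<kappa>2 \<rho>2. \<kappa>2 < 0 \<and> \<rho>2 < 0 \<and>
             (\<forall>x>0. \<forall>y. 0 > hA \<alpha> \<gamma> h A x y \<and> hA \<alpha> \<gamma> h A x y \<ge> \<kappa>2 * (1 + x powr \<rho>2))"
    proof (intro exI conjI allI impI)
      show "(1 + M) / \<alpha> < 0" using an M by (simp add: divide_pos_neg)
      show "\<alpha> < 0" using an .
      fix x :: real and y assume x: "0 < x"
      show "0 > hA \<alpha> \<gamma> h A x y" unfolding hA_eq using S_pos[OF x, of y] an
        by (simp add: divide_pos_neg)
      have "hA \<alpha> \<gamma> h A x y \<ge> (1 / \<alpha>) * ((1 + M) * (1 + x powr \<alpha>))"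
        unfolding hA_eq using S_le[OF x pw[OF x], of y] an by (intro mult_left_mono_neg) auto
      thus "hA \<alpha> \<gamma> h A x y \<ge> (1 + M) / \<alpha> * (1 + x powr \<alpha>)" by simp
    qed
  qed
  show ?thesis using part1 part2 part3 part4 by blast
qed

end
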